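(* Let $A$ be a simple hyperbolic $d$-arrangement of $n$ hyperplanes in $\mathbb{H}^k$. Then the concept class $C\subseteq\{0,1\}^n$ corresponding to $A$ is a maximum class of VC-dimension $d$ in the $n$-cube.
   Context: $\mathbb{H}^k$ is the Klein model of hyperbolic space: the open unit ball in $\mathbb{R}^k$, whose hyperbolic planes are the nonempty intersections of affine planes of $\mathbb{R}^k$ with the open ball. A simple hyperbolic $d$-arrangement is a collection of $n$ oriented hyperbolic hyperplanes in $\mathbb{H}^k$ such that every sub-collection of $d$ of them mutually intersects in a $(k-d)$-dimensional hyperbolic plane and every sub-collection of $d+1$ of them has empty mutual intersection. Each cell of the complement gives the concept in $\{0,1\}^n$ whose $i$-th coordinate records the side of the $i$-th hyperplane containing the cell; $C$ is the set of these concepts. $C$ is maximum of VC-dimension $d$ if its VC-dimension is $d$ and $|C|=\sum_{i=0}^d\binom{n}{i}$. *)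

theory Defs
  imports "HOL-Analysis.Analysis"
begin

text \<open>Klein model: the open unit ball of a Euclidean space 'a (k = DIM('a)).\<close>

definition klein :: "'a::euclidean_space set" where
  "klein = ball 0 1"

definition hplane :: "'a::euclidean_space \<times> real \<Rightarrow> 'a set" where
  "hplane h = {x. fst h \<bullet> x = snd h}"

definition pos_side :: "'a::euclidean_space \<times> real \<Rightarrow> 'a set" where
  "pos_side h = {x. fst h \<bullet> x > snd h}"

definition hyperbolic_plane :: "int \<Rightarrow> 'a::euclidean_space set \<Rightarrow> bool" where
  "hyperbolic_plane m P \<longleftrightarrow>
     (\<exists>A. affine A \<and> aff_dim A = m \<and> P = A \<inter> klein \<and> P \<noteq> {})"

definition hyp_hyperplane :: "'a::euclidean_space \<times> real \<Rightarrow> bool" where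
  "hyp_hyperplane h \<longleftrightarrow> fst h \<noteq> 0 \<and> hplane h \<inter> klein \<noteq> {}"

definition simple_hyp_arrangement ::
    "nat \<Rightarrow> nat \<Rightarrow> (nat \<Rightarrow> 'a::euclidean_space \<times> real) \<Rightarrow> bool" where
  "simple_hyp_arrangement d n h \<longleftrightarrow>
     (\<forall>i<n. hyp_hyperplane (h i)) \<and>
     (\<forall>I. I \<subseteq> {..<n} \<and> card I = d \<longrightarrow>
        hyperbolic_plane (int DIM('a) - int d) ((\<Inter>i\<in>I. hplane (h i)) \<inter> klein)) \<and>
     (\<forall>I. I \<subseteq> {..<n} \<and> card I = Suc d \<longrightarrow>
        (\<Inter>i\<in>I. hplane (h i)) \<inter> klein = {})"

definition cells :: "nat \<Rightarrow> (nat \<Rightarrow> 'a::euclidean_space \<times> real) \<Rightarrow> 'a set set" where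
  "cells n h = components (klein - (\<Union>i<n. hplane (h i)))"

text \<open>A concept in {0,1}^n is represented as the set of coordinates equal to 1.\<close>
definition cell_concept :: "nat \<Rightarrow> (nat \<Rightarrow> 'a::euclidean_space \<times> real) \<Rightarrow> 'a set \<Rightarrow> nat set" where
  "cell_concept n h c = {i. i < n \<and> c \<subseteq> pos_side (h i)}"

definition concept_class :: "nat \<Rightarrow> (nat \<Rightarrow> 'a::euclidean_space \<times> real) \<Rightarrow> nat set set" where
  "concept_class n h = cell_concept n h ` cells n h"

definition shatters :: "nat set set \<Rightarrow> nat set \<Rightarrow> bool" where
  "shatters C S \<longleftrightarrow> (\<lambda>c. c \<inter> S) ` C = Pow S"

definition has_VC_dim :: "nat \<Rightarrow> nat set set \<Rightarrow> nat \<Rightarrow> bool" where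
  "has_VC_dim n C d \<longleftrightarrow>
     (\<exists>S. S \<subseteq> {..<n} \<and> card S = d \<and> shatters C S) \<and>
     (\<forall>S. S \<subseteq> {..<n} \<and> shatters C S \<longrightarrow> card S \<le> d)"

definition maximum_class :: "nat \<Rightarrow> nat set set \<Rightarrow> nat \<Rightarrow> bool" where
  "maximum_class n C d \<longleftrightarrow>
     C \<subseteq> Pow {..<n} \<and> has_VC_dim n C d \<and> card C = (\<Sum>i\<le>d. n choose i)"

end

theory Submission
  imports Defs
begin

definition strict :: "(nat \<Rightarrow> 'a::euclidean_space \<times> real) \<Rightarrow> nat set \<Rightarrow> nat set \<Rightarrow> 'a \<Rightarrow> bool" where
  "strict h T F x \<longleftrightarrow> (\<forall>i\<in>F. (i\<in>T \<longrightarrow> snd (h i) < fst (h i) \<bullet> x) \<and> (i\<notin>T \<longrightarrow> fst (h i) \<bullet> x < snd (h i)))"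

lemma cross:
  fixes K :: "'a::euclidean_space set" and h :: "nat \<Rightarrow> 'a \<times> real"
  assumes K: "convex K" and pq: "p \<in> K" "q \<in> K" and sp: "strict h T F p" and sq: "strict h T F q"
    and jp: "fst (h j) \<bullet> p < snd (h j)" and jq: "snd (h j) < fst (h j) \<bullet> q"
  shows "\<exists>z\<in>K. strict h T F z \<and> fst (h j) \<bullet> z = snd (h j)"
proof -
  define a where "a = fst (h j)"
  define b where "b = snd (h j)"
  define t where "t = (b - a \<bullet> p) / (a \<bullet> q - a \<bullet> p)"
  have t0: "0 < t" and t1: "t < 1" using jp jq by (auto simp: t_def a_def b_def field_simps)
  define z :: 'a where "z = (1 - t) *\<^sub>R p + t *\<^sub>R q"
  have "z \<in> K" using K pq t0 t1 unfolding z_def convex_def by auto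
  moreover have "a \<bullet> z = b"
  proof -
    have ne: "a \<bullet> q - a \<bullet> p \<noteq> 0" using jp jq by (simp add: a_def b_def)
    have "a \<bullet> z = a \<bullet> p + t * (a \<bullet> q - a \<bullet> p)" by (simp add: z_def inner_add_right algebra_simps)
    also have "\<dots> = b" using ne by (simp add: t_def)
    finally show ?thesis .
  qed
  moreover have "strict h T F z"
    unfolding strict_def
  proof (intro ballI conjI impI)
    fix i assume i: "i \<in> F"
    { assume "i \<in> T"
      hence "snd (h i) < fst (h i) \<bullet> p" "snd (h i) < fst (h i) \<bullet> q" using sp sq i by (auto simp: strict_def)
      hence "- (fst (h i) \<bullet> z) < - snd (h i)"
        using convex_bound_lt[of "- (fst (h i) \<bullet> p)" "- snd (h i)" "- (fst (h i) \<bullet> q)" "1 - t" t] t0 t1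
        by (simp add: z_def inner_add_right)
      thus "snd (h i) < fst (h i) \<bullet> z" by simp }
    { assume "i \<notin> T"
      hence "fst (h i) \<bullet> p < snd (h i)" "fst (h i) \<bullet> q < snd (h i)" using sp sq i by (auto simp: strict_def)
      thus "fst (h i) \<bullet> z < snd (h i)"
        using convex_bound_lt[of "fst (h i) \<bullet> p" "snd (h i)" "fst (h i) \<bullet> q" "1 - t" t] t0 t1
        by (simp add: z_def inner_add_right) }
  qed
  ultimately show ?thesis unfolding a_def b_def by blast
qed

lemma perturb:
  fixes h :: "nat \<Rightarrow> 'a::euclidean_space \<times> real"
  assumes L: "affine L" and F: "finite F" and x: "x \<in> ball 0 1" "x \<in> L" and y: "y \<in> L"
    and sx: "strict h T F x" and xj: "fst (h j) \<bullet> x = snd (h j)" and yj: "fst (h j) \<bullet> y \<noteq> snd (h j)"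
  shows "\<exists>p\<in>ball 0 1 \<inter> L. strict h T F p \<and> snd (h j) < fst (h j) \<bullet> p"
    and "\<exists>p\<in>ball 0 1 \<inter> L. strict h T F p \<and> fst (h j) \<bullet> p < snd (h j)"
proof -
  define v where "v = y - x"
  define c where "c = fst (h j) \<bullet> v"
  have c: "c \<noteq> 0" using xj yj by (simp add: c_def v_def inner_diff_right)
  define g where "g = (\<lambda>t::real. x + t *\<^sub>R v)"
  have gL: "g t \<in> L" for t
  proof -
    have "g t = (1 - t) *\<^sub>R x + t *\<^sub>R y" by (simp add: g_def v_def algebra_simps)
    thus ?thesis using L x y unfolding affine_def by simp
  qed
  have gj: "fst (h j) \<bullet> g t = snd (h j) + t * c" for t
    using xj by (simp add: g_def c_def inner_add_right)
  have lim: "((\<lambda>t. w \<bullet> g t) \<longlongrightarrow> w \<bullet> x) (at 0)" for w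
  proof -
    have "((\<lambda>t. w \<bullet> (x + t *\<^sub>R v)) \<longlongrightarrow> w \<bullet> (x + 0 *\<^sub>R v)) (at 0)"
      by (intro tendsto_intros)
    thus ?thesis by (simp add: g_def)
  qed
  have limn: "((\<lambda>t. norm (g t)) \<longlongrightarrow> norm (x + 0 *\<^sub>R v)) (at 0)"
    unfolding g_def by (intro tendsto_intros)
  have ev1: "eventually (\<lambda>t. norm (g t) < 1) (at 0)"
    using order_tendstoD(2)[OF limn] x by simp
  have ev2: "eventually (\<lambda>t. strict h T F (g t)) (at 0)"
    unfolding strict_def
  proof (rule eventually_ball_finite[OF F], intro ballI)
    fix i assume i: "i \<in> F"
    show "eventually (\<lambda>t. (i \<in> T \<longrightarrow> snd (h i) < fst (h i) \<bullet> g t) \<and> (i \<notin> T \<longrightarrow> fst (h i) \<bullet> g t < snd (h i))) (at 0)"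
    proof (cases "i \<in> T")
      case True
      hence "snd (h i) < fst (h i) \<bullet> x" using sx i by (auto simp: strict_def)
      from order_tendstoD(1)[OF lim this] True show ?thesis by simp
    next
      case False
      hence "fst (h i) \<bullet> x < snd (h i)" using sx i by (auto simp: strict_def)
      from order_tendstoD(2)[OF lim this] False show ?thesis by simp
    qed
  qed
  have "eventually (\<lambda>t. norm (g t) < 1 \<and> strict h T F (g t)) (at 0)"
    using ev1 ev2 by (rule eventually_conj)
  then obtain e where e: "e > 0" and P: "\<And>t. t \<noteq> 0 \<Longrightarrow> dist t 0 < e \<Longrightarrow> norm (g t) < 1 \<and> strict h T F (g t)"
    unfolding eventually_at by auto
  define t1 where "t1 = (if c > 0 then e / 2 else - e / 2)"
  have t1: "t1 \<noteq> 0" "dist t1 0 < e" "dist (- t1) 0 < e" "- t1 \<noteq> 0" using e by (auto simp: t1_def)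
  have "t1 * c > 0" using c e by (auto simp: t1_def mult_pos_neg)
  show "\<exists>p\<in>ball 0 1 \<inter> L. strict h T F p \<and> snd (h j) < fst (h j) \<bullet> p"
    using P[OF t1(1,2)] gL[of t1] gj[of t1] \<open>t1 * c > 0\<close> by (intro bexI[of _ "g t1"]) auto
  show "\<exists>p\<in>ball 0 1 \<inter> L. strict h T F p \<and> fst (h j) \<bullet> p < snd (h j)"
    using P[OF t1(4,3)] gL[of "- t1"] gj[of "- t1"] \<open>t1 * c > 0\<close> by (intro bexI[of _ "g (- t1)"]) auto
qed

definition realz :: "(nat \<Rightarrow> 'a::euclidean_space \<times> real) \<Rightarrow> 'a set \<Rightarrow> nat set \<Rightarrow> nat set set" where
  "realz h K F = {T. T \<subseteq> F \<and> (\<exists>x\<in>K. strict h T F x)}"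

definition HI :: "(nat \<Rightarrow> 'a::euclidean_space \<times> real) \<Rightarrow> nat set \<Rightarrow> 'a set" where
  "HI h I = (\<Inter>i\<in>I. hplane (h i))"

definition good :: "(nat \<Rightarrow> 'a::euclidean_space \<times> real) \<Rightarrow> 'a set \<Rightarrow> nat set \<Rightarrow> nat \<Rightarrow> bool" where
  "good h L N d \<longleftrightarrow>
    (\<forall>I. I \<subseteq> N \<longrightarrow> card I \<le> d \<longrightarrow> L \<inter> HI h I \<inter> ball 0 1 \<noteq> {}) \<and>
    (\<forall>I. I \<subseteq> N \<longrightarrow> card I = Suc d \<longrightarrow> L \<inter> HI h I \<inter> ball 0 1 = {}) \<and>
    (\<forall>I j. I \<subseteq> N \<longrightarrow> j \<in> N \<longrightarrow> j \<notin> I \<longrightarrow> card I < d \<longrightarrow> \<not> (L \<inter> HI h I \<subseteq> hplane (h j)))"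

lemma strict_cong: "(\<And>i. i \<in> F \<Longrightarrow> i \<in> T \<longleftrightarrow> i \<in> T') \<Longrightarrow> strict h T F x = strict h T' F x"
  unfolding strict_def by auto

lemma strict_insert: "strict h T (insert j F) x \<longleftrightarrow> strict h T F x \<and>
   (j \<in> T \<longrightarrow> snd (h j) < fst (h j) \<bullet> x) \<and> (j \<notin> T \<longrightarrow> fst (h j) \<bullet> x < snd (h j))"
  unfolding strict_def by auto

lemma count_d0:
  fixes h :: "nat \<Rightarrow> 'a::euclidean_space \<times> real"
  assumes N: "finite N" and L: "affine L" and g: "good h L N 0"
  shows "card (realz h (ball 0 1 \<inter> L) N) = 1"
proof -
  let ?K = "ball 0 1 \<inter> L"
  have cK: "convex ?K" using L by (simp add: convex_Int affine_imp_convex)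
  from g have "L \<inter> HI h {} \<inter> ball 0 1 \<noteq> {}" unfolding good_def by auto
  hence "?K \<noteq> {}" by (auto simp: HI_def)
  then obtain x where x: "x \<in> ?K" by blast
  have off: "z \<in> ?K \<Longrightarrow> i \<in> N \<Longrightarrow> fst (h i) \<bullet> z \<noteq> snd (h i)" for z i
  proof
    assume "z \<in> ?K" "i \<in> N" "fst (h i) \<bullet> z = snd (h i)"
    moreover from g \<open>i \<in> N\<close> have "L \<inter> HI h {i} \<inter> ball 0 1 = {}" unfolding good_def by auto
    ultimately show False by (auto simp: HI_def hplane_def)
  qed
  define T0 where "T0 = {i\<in>N. snd (h i) < fst (h i) \<bullet> x}"
  have sx: "strict h T0 N x" using off[OF x] by (force simp: strict_def T0_def)
  have "realz h ?K N = {T0}"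
  proof (rule set_eqI, rule iffI)
    fix T assume "T \<in> realz h ?K N"
    then obtain y where T: "T \<subseteq> N" and y: "y \<in> ?K" and sy: "strict h T N y" by (auto simp: realz_def)
    have "T = T0"
    proof (rule ccontr)
      assume "T \<noteq> T0"
      then obtain i where i: "i \<in> N" and d: "(i \<in> T \<and> i \<notin> T0) \<or> (i \<notin> T \<and> i \<in> T0)"
        using T by (auto simp: T0_def)
      have st: "strict h {} {} z" for z by (simp add: strict_def)
      from d have "\<exists>z\<in>?K. strict h {} {} z \<and> fst (h i) \<bullet> z = snd (h i)"
      proof
        assume "i \<in> T \<and> i \<notin> T0"
        hence "fst (h i) \<bullet> x < snd (h i)" "snd (h i) < fst (h i) \<bullet> y"
          using sx sy i by (auto simp: strict_def)
        thus ?thesis using cross[OF cK x y st st] by blast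
      next
        assume "i \<notin> T \<and> i \<in> T0"
        hence "fst (h i) \<bullet> y < snd (h i)" "snd (h i) < fst (h i) \<bullet> x"
          using sx sy i by (auto simp: strict_def)
        thus ?thesis using cross[OF cK y x st st] by blast
      qed
      thus False using off i by blast
    qed
    thus "T \<in> {T0}" by simp
  next
    fix T assume "T \<in> {T0}"
    thus "T \<in> realz h ?K N" using sx x by (auto simp: realz_def T0_def)
  qed
  thus ?thesis by simp
qed

lemma count_step:
  fixes h :: "nat \<Rightarrow> 'a::euclidean_space \<times> real"
  assumes F: "finite F" and j: "j \<notin> F" and L: "affine L" and g: "good h L (insert j F) (Suc d)"
  shows "card (realz h (ball 0 1 \<inter> L) (insert j F)) =
         card (realz h (ball 0 1 \<inter> L) F) + card (realz h (ball 0 1 \<inter> (L \<inter> hplane (h j))) F)"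
proof -
  let ?K = "ball 0 1 \<inter> L"
  have cK: "convex ?K" using L by (simp add: convex_Int affine_imp_convex)
  from g have "\<not> (L \<inter> HI h {} \<subseteq> hplane (h j))" unfolding good_def by auto
  then obtain y where y: "y \<in> L" "fst (h j) \<bullet> y \<noteq> snd (h j)" by (auto simp: HI_def hplane_def)
  define R where "R = realz h ?K (insert j F)"
  define X where "X = {T\<in>R. j \<notin> T}"
  define Y where "Y = {T\<in>R. j \<in> T}"
  define f where "f = (\<lambda>T::nat set. T - {j})"
  have "R \<subseteq> Pow (insert j F)" by (auto simp: R_def realz_def)
  hence finR: "finite R" using F by (meson finite_Pow_iff finite_insert finite_subset)
  have finX: "finite X" and finY: "finite Y" using finR unfolding X_def Y_def by simp_all
  have RXY: "R = X \<union> Y" "X \<inter> Y = {}" unfolding X_def Y_def by blast+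
  have injf: "inj_on f Y"
  proof (rule inj_onI)
    fix S T assume "S \<in> Y" "T \<in> Y" "f S = f T"
    hence "j \<in> S" "j \<in> T" "S - {j} = T - {j}" unfolding Y_def f_def by auto
    thus "S = T" by (metis insert_Diff)
  qed
  have c1: "X \<union> f ` Y = realz h ?K F"
  proof (rule set_eqI, rule iffI)
    fix T assume "T \<in> X \<union> f ` Y"
    thus "T \<in> realz h ?K F"
    proof
      assume "T \<in> X"
      then obtain x where "T \<subseteq> insert j F" "j \<notin> T" "x \<in> ?K" "strict h T (insert j F) x"
        by (auto simp: X_def R_def realz_def)
      thus ?thesis by (auto simp: realz_def strict_insert)
    next
      assume "T \<in> f ` Y"
      then obtain S x where "T = S - {j}" "S \<subseteq> insert j F" "x \<in> ?K" "strict h S (insert j F) x"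
        by (auto simp: Y_def R_def realz_def f_def)
      moreover have "strict h S F x = strict h (S - {j}) F x" using j by (intro strict_cong) auto
      ultimately show ?thesis by (auto simp: realz_def strict_insert)
    qed
  next
    fix T assume "T \<in> realz h ?K F"
    then obtain x where T: "T \<subseteq> F" and x: "x \<in> ?K" and sx: "strict h T F x" by (auto simp: realz_def)
    have TjF: "strict h (insert j T) F z = strict h T F z" for z using j by (intro strict_cong) auto
    have fT: "f (insert j T) = T" using T j by (auto simp: f_def)
    have pos: "T \<in> X \<union> f ` Y" if p: "p \<in> ?K" "strict h T F p" "snd (h j) < fst (h j) \<bullet> p" for p
    proof -
      have "insert j T \<in> Y" using p T TjF[of p] by (auto simp: Y_def R_def realz_def strict_insert)
      thus ?thesis using fT by (metis UnI2 image_eqI)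
    qed
    have neg: "T \<in> X \<union> f ` Y" if p: "p \<in> ?K" "strict h T F p" "fst (h j) \<bullet> p < snd (h j)" for p
    proof -
      have "T \<in> X" using p T j by (auto simp: X_def R_def realz_def strict_insert)
      thus ?thesis by simp
    qed
    consider "snd (h j) < fst (h j) \<bullet> x" | "fst (h j) \<bullet> x < snd (h j)" | "fst (h j) \<bullet> x = snd (h j)"
      by linarith
    thus "T \<in> X \<union> f ` Y"
    proof cases
      case 1 thus ?thesis using pos x sx by blast
    next
      case 2 thus ?thesis using neg x sx by blast
    next
      case 3
      from perturb(1)[OF L F _ _ y(1) sx 3 y(2)] x obtain p where "p \<in> ?K" "strict h T F p" "snd (h j) < fst (h j) \<bullet> p"
        by auto
      thus ?thesis using pos by blast
    qed
  qed
  have c2: "X \<inter> f ` Y = realz h (ball 0 1 \<inter> (L \<inter> hplane (h j))) F"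
  proof (rule set_eqI, rule iffI)
    fix T assume "T \<in> X \<inter> f ` Y"
    hence TX: "T \<in> X" and TY: "T \<in> f ` Y" by auto
    from TX obtain p where p1: "T \<subseteq> insert j F" "j \<notin> T" "p \<in> ?K" "strict h T (insert j F) p"
      by (auto simp: X_def R_def realz_def)
    from TY obtain S where S: "T = S - {j}" "S \<in> Y" by (auto simp: f_def)
    from S(2) obtain q where q1: "j \<in> S" "q \<in> ?K" "strict h S (insert j F) q"
      by (auto simp: Y_def R_def realz_def)
    have e: "strict h S F q = strict h (S - {j}) F q" using j by (intro strict_cong) auto
    have "T \<subseteq> F" using p1 by blast
    moreover have "strict h T F p" "fst (h j) \<bullet> p < snd (h j)" using p1(2,4) unfolding strict_insert by auto
    moreover have "strict h T F q" "snd (h j) < fst (h j) \<bullet> q" using q1(1,3) e S(1) unfolding strict_insert by auto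
    ultimately have "T \<subseteq> F" "p \<in> ?K" "q \<in> ?K" "strict h T F p" "strict h T F q"
      "fst (h j) \<bullet> p < snd (h j)" "snd (h j) < fst (h j) \<bullet> q" using p1(3) q1(2) by auto
    with cross[OF cK this(2,3,4,5,6,7)] show "T \<in> realz h (ball 0 1 \<inter> (L \<inter> hplane (h j))) F"
      by (auto simp: realz_def hplane_def)
  next
    fix T assume "T \<in> realz h (ball 0 1 \<inter> (L \<inter> hplane (h j))) F"
    then obtain x where T: "T \<subseteq> F" and x: "x \<in> ?K" "fst (h j) \<bullet> x = snd (h j)" and sx: "strict h T F x"
      by (auto simp: realz_def hplane_def)
    have TjF: "strict h (insert j T) F z = strict h T F z" for z using j by (intro strict_cong) auto
    have fT: "f (insert j T) = T" using T j by (auto simp: f_def)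
    from perturb[OF L F _ _ y(1) sx x(2) y(2)] x obtain p q where
      p: "p \<in> ?K" "strict h T F p" "snd (h j) < fst (h j) \<bullet> p" and
      q: "q \<in> ?K" "strict h T F q" "fst (h j) \<bullet> q < snd (h j)" by auto
    have "insert j T \<in> Y" using p T TjF[of p] by (auto simp: Y_def R_def realz_def strict_insert)
    hence "T \<in> f ` Y" using fT by (metis image_eqI)
    moreover have "T \<in> X" using q T j by (auto simp: X_def R_def realz_def strict_insert)
    ultimately show "T \<in> X \<inter> f ` Y" by simp
  qed
  have e1: "card R = card X + card Y" using RXY finX finY card_Un_disjoint by metis
  have e2: "card Y = card (f ` Y)" using injf card_image by metis
  have e3: "card X + card (f ` Y) = card (X \<union> f ` Y) + card (X \<inter> f ` Y)"
    using finX finY card_Un_Int finite_imageI by metis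
  show ?thesis using e1 e2 e3 unfolding R_def c1 c2 by linarith
qed

lemma Phi_Suc: "(\<Sum>i\<le>Suc d. Suc m choose i) = (\<Sum>i\<le>Suc d. m choose i) + (\<Sum>i\<le>d. m choose i)"
proof -
  have "(\<Sum>i\<le>Suc d. Suc m choose i) = (Suc m choose 0) + (\<Sum>i\<le>d. Suc m choose Suc i)"
    by (subst sum.atMost_Suc_shift) simp
  also have "(\<Sum>i\<le>d. Suc m choose Suc i) = (\<Sum>i\<le>d. m choose i) + (\<Sum>i\<le>d. m choose Suc i)"
    by (simp add: sum.distrib)
  also have "(\<Sum>i\<le>Suc d. m choose i) = (m choose 0) + (\<Sum>i\<le>d. m choose Suc i)"
    by (subst sum.atMost_Suc_shift) simp
  ultimately show ?thesis by simp
qed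

lemma HI_insert: "HI h (insert j I) = hplane (h j) \<inter> HI h I"
  by (simp add: HI_def)

lemma good_sub:
  assumes g: "good h L (insert j F) d" shows "good h L F d"
  unfolding good_def
proof (intro conjI allI impI)
  fix I assume I: "I \<subseteq> F"
  hence I': "I \<subseteq> insert j F" by blast
  { assume "card I \<le> d" thus "L \<inter> HI h I \<inter> ball 0 1 \<noteq> {}" using g I' unfolding good_def by simp }
  { assume "card I = Suc d" thus "L \<inter> HI h I \<inter> ball 0 1 = {}" using g I' unfolding good_def by simp }
  fix j' assume "j' \<in> F" "j' \<notin> I" "card I < d"
  thus "\<not> L \<inter> HI h I \<subseteq> hplane (h j')" using g I' unfolding good_def by simp
qed

lemma good_restr:
  fixes h :: "nat \<Rightarrow> 'a::euclidean_space \<times> real"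
  assumes F: "finite F" and j: "j \<notin> F" and g: "good h L (insert j F) (Suc d)"
  shows "good h (L \<inter> hplane (h j)) F d"
  unfolding good_def
proof (intro conjI allI impI)
  fix I assume I: "I \<subseteq> F"
  have fI: "finite I" using I F finite_subset by blast
  have jI: "j \<notin> I" using I j by blast
  have cI: "card (insert j I) = Suc (card I)" using fI jI by simp
  have eq: "L \<inter> hplane (h j) \<inter> HI h I = L \<inter> HI h (insert j I)" by (auto simp: HI_insert)
  have sub: "insert j I \<subseteq> insert j F" using I by blast
  note g1 = g[unfolded good_def, THEN conjunct1, rule_format, OF sub]
  note g2 = g[unfolded good_def, THEN conjunct2, THEN conjunct1, rule_format, OF sub]
  note g3 = g[unfolded good_def, THEN conjunct2, THEN conjunct2, rule_format, OF sub]
  { assume "card I \<le> d"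
    thus "L \<inter> hplane (h j) \<inter> HI h I \<inter> ball 0 1 \<noteq> {}"
      using g1 cI unfolding eq by simp }
  { assume "card I = Suc d"
    thus "L \<inter> hplane (h j) \<inter> HI h I \<inter> ball 0 1 = {}"
      using g2 cI unfolding eq by simp }
  fix j' assume j': "j' \<in> F" "j' \<notin> I" "card I < d"
  moreover have "j' \<noteq> j" using \<open>j' \<in> F\<close> j by blast
  ultimately have "j' \<in> insert j F" "j' \<notin> insert j I" "card (insert j I) < Suc d" using cI by auto
  from g3[OF this] show "\<not> L \<inter> hplane (h j) \<inter> HI h I \<subseteq> hplane (h j')" unfolding eq .
qed

lemma count:
  fixes h :: "nat \<Rightarrow> 'a::euclidean_space \<times> real"
  assumes "finite N" shows "affine L \<Longrightarrow> good h L N d \<Longrightarrow>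
    card (realz h (ball 0 1 \<inter> L) N) = (\<Sum>i\<le>d. card N choose i)"
  using assms
proof (induction N arbitrary: L d rule: finite_induct)
  case empty
  from empty(2) have "L \<inter> HI h {} \<inter> ball 0 1 \<noteq> {}" unfolding good_def by auto
  hence "ball 0 1 \<inter> L \<noteq> {}" by (auto simp: HI_def)
  then obtain x where "x \<in> ball 0 1 \<inter> L" by blast
  hence "realz h (ball 0 1 \<inter> L) {} = {{}}" by (auto simp: realz_def strict_def)
  moreover have "(\<Sum>i\<le>d. (0::nat) choose i) = 1" by (induction d) auto
  ultimately show ?case by simp
next
  case (insert j F)
  show ?case
  proof (cases d)
    case 0
    thus ?thesis using count_d0[OF _ insert(4)] insert by simp
  next
    case (Suc d')
    have L': "affine (L \<inter> hplane (h j))" using insert(4) by (simp add: affine_Int hplane_def affine_hyperplane)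
    have g: "good h L (insert j F) (Suc d')" using insert(5) Suc by simp
    have s1: "card (realz h (ball 0 1 \<inter> L) (insert j F)) =
         card (realz h (ball 0 1 \<inter> L) F) + card (realz h (ball 0 1 \<inter> (L \<inter> hplane (h j))) F)"
      by (rule count_step[OF insert(1,2,4) g])
    have s2: "card (realz h (ball 0 1 \<inter> L) F) = (\<Sum>i\<le>Suc d'. card F choose i)"
      using insert.IH[OF insert(4) good_sub[OF g]] .
    have s3: "card (realz h (ball 0 1 \<inter> (L \<inter> hplane (h j))) F) = (\<Sum>i\<le>d'. card F choose i)"
      using insert.IH[OF L' good_restr[OF insert(1,2) g]] .
    have ci: "card (insert j F) = Suc (card F)" using insert(1,2) by simp
    show ?thesis unfolding Suc ci Phi_Suc s1 s2 s3 by (rule refl)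
  qed
qed

lemma orthant:
  fixes h :: "nat \<Rightarrow> 'a::euclidean_space \<times> real"
  assumes "finite S"
  shows "convex K \<Longrightarrow> (\<forall>T. T \<subseteq> S \<longrightarrow> (\<exists>x\<in>K. strict h T S x)) \<Longrightarrow> \<exists>x\<in>K. \<forall>i\<in>S. fst (h i) \<bullet> x = snd (h i)"
  using assms
proof (induction S arbitrary: K rule: finite_induct)
  case empty
  thus ?case by auto
next
  case (insert j F)
  let ?K = "K \<inter> hplane (h j)"
  have cK: "convex ?K" using insert(4) by (simp add: convex_Int hplane_def convex_hyperplane)
  have "\<forall>T. T \<subseteq> F \<longrightarrow> (\<exists>x\<in>?K. strict h T F x)"
  proof (intro allI impI)
    fix T assume T: "T \<subseteq> F"
    have jT: "j \<notin> T" using T insert(2) by blast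
    from insert(5) T obtain p where p: "p \<in> K" "strict h T (insert j F) p" by blast
    from insert(5) T obtain q where q: "q \<in> K" "strict h (insert j T) (insert j F) q"
      by (metis insert_mono)
    have e: "strict h (insert j T) F q = strict h T F q" using insert(2) by (intro strict_cong) auto
    have "strict h T F p" "fst (h j) \<bullet> p < snd (h j)" using p(2) jT unfolding strict_insert by auto
    moreover have "strict h T F q" "snd (h j) < fst (h j) \<bullet> q" using q(2) e unfolding strict_insert by auto
    ultimately obtain z where "z \<in> K" "strict h T F z" "fst (h j) \<bullet> z = snd (h j)"
      using cross[OF insert(4) p(1) q(1)] by blast
    thus "\<exists>x\<in>?K. strict h T F x" by (auto simp: hplane_def)
  qed
  from insert.IH[OF cK this] show ?case by (auto simp: hplane_def)
qed

lemma affine_HI: "affine (HI h I)"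
  unfolding HI_def by (intro affine_Inter) (auto simp: hplane_def affine_hyperplane)

lemma affdim_HI:
  fixes h :: "nat \<Rightarrow> 'a::euclidean_space \<times> real"
  assumes "finite I" shows "HI h I \<noteq> {} \<Longrightarrow> aff_dim (HI h I) \<ge> int DIM('a) - int (card I)"
  using assms
proof (induction I rule: finite_induct)
  case empty thus ?case by (simp add: HI_def)
next
  case (insert j I)
  have ne: "HI h I \<inter> {x. fst (h j) \<bullet> x = snd (h j)} \<noteq> {}"
    using insert(4) by (auto simp: HI_insert hplane_def)
  hence "HI h I \<noteq> {}" by blast
  with insert.IH have ih: "aff_dim (HI h I) \<ge> int DIM('a) - int (card I)" .
  have "aff_dim (HI h I \<inter> {x. fst (h j) \<bullet> x = snd (h j)}) \<ge> aff_dim (HI h I) - 1"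
    using aff_dim_affine_Int_hyperplane[OF affine_HI[of h I], where a="fst (h j)" and b="snd (h j)"] ne by auto
  moreover have "HI h (insert j I) = HI h I \<inter> {x. fst (h j) \<bullet> x = snd (h j)}"
    by (auto simp: HI_insert hplane_def)
  ultimately show ?case using ih insert(1,2) by simp
qed

lemma HI_eq: "(\<Inter>i\<in>I. hplane (h i)) = HI h I" by (simp add: HI_def)

lemma key:
  fixes h :: "nat \<Rightarrow> 'a::euclidean_space \<times> real"
  assumes sa: "simple_hyp_arrangement d n h" and S: "S \<subseteq> {..<n}" "card S = d"
    and I: "I \<subseteq> S" and j: "j \<in> S" "j \<notin> I"
  shows "\<not> (HI h I \<subseteq> hplane (h j))"
proof
  assume sub: "HI h I \<subseteq> hplane (h j)"
  have fS: "finite S" using S(1) finite_subset by blast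
  from sa S have "hyperbolic_plane (int DIM('a) - int d) (HI h S \<inter> klein)"
    unfolding simple_hyp_arrangement_def HI_eq by blast
  then obtain A where A: "affine A" "aff_dim A = int DIM('a) - int d" "HI h S \<inter> ball 0 1 = A \<inter> ball 0 1"
    "HI h S \<inter> ball 0 1 \<noteq> {}"
    unfolding hyperbolic_plane_def klein_def by blast
  have h1: "affine hull (HI h S \<inter> ball 0 1) = HI h S"
    using affine_hull_affine_Int_open[OF affine_HI open_ball A(4)] affine_HI affine_hull_eq by metis
  have h2: "affine hull (A \<inter> ball 0 1) = A"
    using affine_hull_affine_Int_open[OF A(1) open_ball] A(3,4) A(1) affine_hull_eq by metis
  have dS: "aff_dim (HI h S) = int DIM('a) - int d"
    using h1 h2 A(2,3) aff_dim_affine_hull by metis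
  define S' where "S' = S - {j}"
  have SS': "S = insert j S'" using j S'_def by blast
  have "I \<subseteq> S'" using I j S'_def by blast
  hence "HI h S' \<subseteq> HI h I" by (auto simp: HI_def)
  hence eqS: "HI h S = HI h S'" using sub unfolding SS' HI_insert by blast
  have cS': "card S' = d - 1" using S(2) j fS S'_def by simp
  have d1: "d \<ge> 1" using j S(2) fS card_0_eq by fastforce
  have "HI h S' \<noteq> {}" using A(4) eqS by blast
  from affdim_HI[OF _ this] fS have "aff_dim (HI h S') \<ge> int DIM('a) - int (card S')"
    unfolding S'_def by simp
  thus False using dS eqS cS' d1 by simp
qed

lemma extend_set:
  assumes I: "I \<subseteq> {..<n}" and c: "card I \<le> d" and d: "d \<le> n"
  obtains J where "I \<subseteq> J" "J \<subseteq> {..<n}" "card J = d"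
proof -
  have fI: "finite I" using I finite_subset by blast
  have "card ({..<n} - I) = n - card I" using I fI by (simp add: card_Diff_subset)
  hence "d - card I \<le> card ({..<n} - I)" using c d by simp
  then obtain T where T: "T \<subseteq> {..<n} - I" "card T = d - card I" "finite T"
    by (rule obtain_subset_with_card_n)
  have "card (I \<union> T) = card I + card T" using T fI by (intro card_Un_disjoint) auto
  hence "card (I \<union> T) = d" using T c by simp
  thus ?thesis using that[of "I \<union> T"] T I by blast
qed

lemma good_S:
  fixes h :: "nat \<Rightarrow> 'a::euclidean_space \<times> real"
  assumes sa: "simple_hyp_arrangement d n h" and S: "S \<subseteq> {..<n}" "card S = d"
  shows "good h UNIV S d"
  unfolding good_def
proof (intro conjI allI impI)
  have fS: "finite S" using S(1) finite_subset by blast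
  fix I assume I: "I \<subseteq> S"
  { assume "card I \<le> d"
    from sa S have "hyperbolic_plane (int DIM('a) - int d) (HI h S \<inter> klein)"
      unfolding simple_hyp_arrangement_def HI_eq by blast
    hence "HI h S \<inter> ball 0 1 \<noteq> {}" unfolding hyperbolic_plane_def klein_def by blast
    moreover have "HI h S \<subseteq> HI h I" using I by (auto simp: HI_def)
    ultimately show "UNIV \<inter> HI h I \<inter> ball 0 1 \<noteq> {}" by blast }
  { assume "card I = Suc d"
    moreover have "card I \<le> card S" using card_mono[OF fS I] .
    ultimately show "UNIV \<inter> HI h I \<inter> ball 0 1 = {}" using S by simp }
  fix j assume "j \<in> S" "j \<notin> I" "card I < d"
  thus "\<not> UNIV \<inter> HI h I \<subseteq> hplane (h j)" using key[OF sa S I] by simp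
qed

lemma good_n:
  fixes h :: "nat \<Rightarrow> 'a::euclidean_space \<times> real"
  assumes sa: "simple_hyp_arrangement d n h" and dn: "d \<le> n"
  shows "good h UNIV {..<n} d"
  unfolding good_def
proof (intro conjI allI impI)
  fix I assume I: "I \<subseteq> {..<n}"
  have fI: "finite I" using I finite_subset by blast
  { assume "card I \<le> d"
    then obtain J where J: "I \<subseteq> J" "J \<subseteq> {..<n}" "card J = d" using extend_set[OF I _ dn] by blast
    from sa J have "hyperbolic_plane (int DIM('a) - int d) (HI h J \<inter> klein)"
      unfolding simple_hyp_arrangement_def HI_eq by blast
    hence "HI h J \<inter> ball 0 1 \<noteq> {}" unfolding hyperbolic_plane_def klein_def by blast
    moreover have "HI h J \<subseteq> HI h I" using J by (auto simp: HI_def)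
    ultimately show "UNIV \<inter> HI h I \<inter> ball 0 1 \<noteq> {}" by blast }
  { assume "card I = Suc d"
    thus "UNIV \<inter> HI h I \<inter> ball 0 1 = {}" using sa I
      unfolding simple_hyp_arrangement_def HI_eq klein_def by auto }
  fix j assume j: "j \<in> {..<n}" "j \<notin> I" "card I < d"
  have "insert j I \<subseteq> {..<n}" "card (insert j I) \<le> d" using j I fI by auto
  then obtain J where J: "insert j I \<subseteq> J" "J \<subseteq> {..<n}" "card J = d" using extend_set[OF _ _ dn] by blast
  have "I \<subseteq> J" "j \<in> J" using J by auto
  from key[OF sa J(2,3) this(1) this(2) j(2)] show "\<not> UNIV \<inter> HI h I \<subseteq> hplane (h j)" by simp
qed

lemma extend_strict:
  fixes h :: "nat \<Rightarrow> 'a::euclidean_space \<times> real"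
  assumes G: "finite G" and nz: "\<forall>j\<in>G. fst (h j) \<noteq> 0"
    and x: "x \<in> ball 0 1" and sx: "strict h T S x" and S: "finite S"
  shows "\<exists>y\<in>ball 0 1. \<exists>T'. strict h T' (S \<union> G) y \<and> (\<forall>i\<in>S. i \<in> T' \<longleftrightarrow> i \<in> T)"
  using G nz
proof (induction G rule: finite_induct)
  case empty thus ?case using x sx by auto
next
  case (insert j G)
  from insert.IH insert(4) obtain y T' where y: "y \<in> ball 0 1" "strict h T' (S \<union> G) y"
    "\<forall>i\<in>S. i \<in> T' \<longleftrightarrow> i \<in> T" by auto
  show ?case
  proof (cases "j \<in> S \<union> G")
    case True
    hence "S \<union> insert j G = S \<union> G" by blast
    thus ?thesis using y by auto
  next
    case False
    have SG: "S \<union> insert j G = insert j (S \<union> G)" by blast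
    have fSG: "finite (S \<union> G)" using S insert(1) by simp
    have cg: "strict h (insert j T') (S \<union> G) z = strict h T' (S \<union> G) z" for z
      using False by (intro strict_cong) auto
    have posc: "?thesis" if p: "p \<in> ball 0 1" "strict h T' (S \<union> G) p" "snd (h j) < fst (h j) \<bullet> p" for p
    proof -
      have "strict h (insert j T') (S \<union> insert j G) p" unfolding SG strict_insert cg using p by simp
      moreover have "\<forall>i\<in>S. i \<in> insert j T' \<longleftrightarrow> i \<in> T" using y(3) False by auto
      ultimately show ?thesis using p(1) by blast
    qed
    consider "snd (h j) < fst (h j) \<bullet> y" | "fst (h j) \<bullet> y < snd (h j)" | "fst (h j) \<bullet> y = snd (h j)"
      by linarith
    thus ?thesis
    proof cases
      case 1 thus ?thesis using posc y by blast
    next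
      case 2
      have cg2: "strict h (T' - {j}) (S \<union> G) y = strict h T' (S \<union> G) y"
        using False by (intro strict_cong) auto
      have "strict h (T' - {j}) (S \<union> insert j G) y" unfolding SG strict_insert cg2 using y(2) 2 by auto
      moreover have "\<forall>i\<in>S. i \<in> T' - {j} \<longleftrightarrow> i \<in> T" using y(3) False by auto
      ultimately show ?thesis using y(1) by blast
    next
      case 3
      have a: "fst (h j) \<noteq> 0" using insert(4) by simp
      have "fst (h j) \<bullet> (y + fst (h j)) \<noteq> snd (h j)" using 3 a by (simp add: inner_add_right)
      from perturb(1)[OF affine_UNIV fSG y(1) _ _ y(2) 3 this] obtain p where
        "p \<in> ball 0 1" "strict h T' (S \<union> G) p" "snd (h j) < fst (h j) \<bullet> p" by auto
      thus ?thesis using posc by blast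
    qed
  qed
qed

lemma concept_class_eq:
  fixes h :: "nat \<Rightarrow> 'a::euclidean_space \<times> real"
  shows "concept_class n h = realz h (ball 0 1) {..<n}"
proof -
  define U where "U = klein - (\<Union>i<n. hplane (h i))"
  define sg where "sg = (\<lambda>x::'a. {i. i < n \<and> snd (h i) < fst (h i) \<bullet> x})"
  have cc: "cell_concept n h (connected_component_set U x) = sg x" if x: "x \<in> U" for x
  proof (rule set_eqI, rule iffI)
    fix i assume "i \<in> cell_concept n h (connected_component_set U x)"
    hence "i < n" "connected_component_set U x \<subseteq> pos_side (h i)" by (auto simp: cell_concept_def)
    moreover have "x \<in> connected_component_set U x" using x by (simp add: connected_component_refl)
    ultimately have "i < n" "x \<in> pos_side (h i)" by blast+
    thus "i \<in> sg x" by (auto simp: sg_def pos_side_def)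
  next
    fix i assume "i \<in> sg x"
    hence i: "i < n" "snd (h i) < fst (h i) \<bullet> x" by (auto simp: sg_def)
    have "connected_component_set U x \<subseteq> pos_side (h i)"
    proof
      fix y assume y: "y \<in> connected_component_set U x"
      show "y \<in> pos_side (h i)"
      proof (rule ccontr)
        assume "y \<notin> pos_side (h i)"
        hence "fst (h i) \<bullet> y \<le> snd (h i)" by (auto simp: pos_side_def)
        moreover have "x \<in> connected_component_set U x" using x by (simp add: connected_component_refl)
        ultimately have "\<exists>z\<in>connected_component_set U x. fst (h i) \<bullet> z = snd (h i)"
          using connected_ivt_hyperplane[OF connected_connected_component y, of x "fst (h i)" "snd (h i)"] i by force
        then
        obtain z where "z \<in> connected_component_set U x" "fst (h i) \<bullet> z = snd (h i)" by force
        hence "z \<in> U" "z \<in> hplane (h i)" using connected_component_subset by (auto simp: hplane_def)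
        thus False using i unfolding U_def by blast
      qed
    qed
    thus "i \<in> cell_concept n h (connected_component_set U x)" using i by (simp add: cell_concept_def)
  qed
  have "concept_class n h = cell_concept n h ` components U"
    by (simp add: concept_class_def cells_def U_def)
  also have "components U = connected_component_set U ` U" by (auto simp: components_iff)
  also have "cell_concept n h ` (connected_component_set U ` U) = sg ` U"
    using cc by (auto simp: image_iff)
  also have "sg ` U = realz h (ball 0 1) {..<n}"
  proof (rule set_eqI, rule iffI)
    fix T assume "T \<in> sg ` U"
    then obtain x where x: "x \<in> U" "T = sg x" by blast
    have "\<forall>i<n. fst (h i) \<bullet> x \<noteq> snd (h i)" using x(1) by (auto simp: U_def hplane_def)
    hence "strict h T {..<n} x" using x(2) by (force simp: strict_def sg_def)
    thus "T \<in> realz h (ball 0 1) {..<n}" using x by (auto simp: realz_def U_def klein_def sg_def)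
  next
    fix T assume "T \<in> realz h (ball 0 1) {..<n}"
    then obtain x where x: "T \<subseteq> {..<n}" "x \<in> ball 0 1" "strict h T {..<n} x" by (auto simp: realz_def)
    have "x \<in> U" using x by (force simp: U_def klein_def hplane_def strict_def)
    moreover have "T = sg x" using x by (force simp: strict_def sg_def)
    ultimately show "T \<in> sg ` U" by blast
  qed
  finally show ?thesis .
qed

theorem corollary5:
  fixes h :: "nat \<Rightarrow> 'a::euclidean_space \<times> real"
    and n d :: nat
  assumes "simple_hyp_arrangement d n h"
    and "d \<le> n"
  shows "maximum_class n (concept_class n h) d"
proof -
  note sa = assms(1) and dn = assms(2)
  let ?C = "concept_class n h"
  have Ceq: "?C = realz h (ball 0 1) {..<n}" by (rule concept_class_eq)
  have nz: "\<forall>j\<in>{..<n}. fst (h j) \<noteq> 0"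
    using sa by (auto simp: simple_hyp_arrangement_def hyp_hyperplane_def)
  have sub: "?C \<subseteq> Pow {..<n}" by (auto simp: Ceq realz_def)
  have "card (realz h (ball 0 1 \<inter> UNIV) {..<n}) = (\<Sum>i\<le>d. card {..<n} choose i)"
    by (rule count[OF finite_lessThan affine_UNIV good_n[OF sa dn]])
  hence card: "card ?C = (\<Sum>i\<le>d. n choose i)" by (simp add: Ceq)
  have vc1: "\<exists>S. S \<subseteq> {..<n} \<and> card S = d \<and> shatters ?C S"
  proof -
    obtain S where S: "S \<subseteq> {..<n}" "card S = d" "finite S"
      using obtain_subset_with_card_n[of d "{..<n}"] dn by auto
    have "card (realz h (ball 0 1 \<inter> UNIV) S) = (\<Sum>i\<le>d. card S choose i)"
      by (rule count[OF S(3) affine_UNIV good_S[OF sa S(1,2)]])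
    hence c1: "card (realz h (ball 0 1) S) = card (Pow S)"
      using S by (simp add: choose_row_sum card_Pow)
    have "realz h (ball 0 1) S \<subseteq> Pow S" by (auto simp: realz_def)
    hence RS: "realz h (ball 0 1) S = Pow S" using c1 S(3) by (simp add: card_subset_eq)
    have "shatters ?C S" unfolding shatters_def
    proof (rule equalityI)
      show "(\<lambda>c. c \<inter> S) ` ?C \<subseteq> Pow S" by auto
      show "Pow S \<subseteq> (\<lambda>c. c \<inter> S) ` ?C"
      proof
        fix T assume "T \<in> Pow S"
        hence T: "T \<subseteq> S" "T \<in> realz h (ball 0 1) S" using RS by auto
        then obtain x where x: "x \<in> ball 0 1" "strict h T S x" by (auto simp: realz_def)
        from extend_strict[OF finite_lessThan nz x S(3)] obtain y T' where
          y: "y \<in> ball 0 1" "strict h T' (S \<union> {..<n}) y" "\<forall>i\<in>S. i \<in> T' \<longleftrightarrow> i \<in> T" by blast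
        have SU: "S \<union> {..<n} = {..<n}" using S by blast
        have "strict h (T' \<inter> {..<n}) {..<n} y = strict h T' {..<n} y" by (intro strict_cong) auto
        hence "T' \<inter> {..<n} \<in> ?C" using y SU by (auto simp: Ceq realz_def)
        moreover have "(T' \<inter> {..<n}) \<inter> S = T" using y(3) T(1) S(1) by blast
        ultimately show "T \<in> (\<lambda>c. c \<inter> S) ` ?C" by force
      qed
    qed
    thus ?thesis using S by blast
  qed
  have vc2: "card S \<le> d" if S: "S \<subseteq> {..<n}" "shatters ?C S" for S
  proof (rule ccontr)
    assume "\<not> card S \<le> d"
    hence "Suc d \<le> card S" by simp
    then obtain S' where S': "S' \<subseteq> S" "card S' = Suc d" "finite S'"
      by (rule obtain_subset_with_card_n)
    have "\<forall>T. T \<subseteq> S' \<longrightarrow> (\<exists>x\<in>ball 0 1. strict h T S' x)"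
    proof (intro allI impI)
      fix T assume T: "T \<subseteq> S'"
      hence "T \<in> (\<lambda>c. c \<inter> S) ` ?C" using S(2) S'(1) unfolding shatters_def by blast
      then obtain c where c: "c \<in> ?C" "T = c \<inter> S" by blast
      then obtain x where x: "x \<in> ball 0 1" "strict h c {..<n} x" by (auto simp: Ceq realz_def)
      have "strict h T S' x" using x(2) S'(1) S(1) T unfolding strict_def c(2) by blast
      thus "\<exists>x\<in>ball 0 1. strict h T S' x" using x(1) by blast
    qed
    from orthant[OF S'(3) convex_ball this] obtain x where
      x: "x \<in> ball 0 1" "\<forall>i\<in>S'. fst (h i) \<bullet> x = snd (h i)" by blast
    have "S' \<subseteq> {..<n}" using S'(1) S(1) by blast
    hence "(\<Inter>i\<in>S'. hplane (h i)) \<inter> klein = {}" using sa S'(2) unfolding simple_hyp_arrangement_def by blast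
    moreover have "x \<in> (\<Inter>i\<in>S'. hplane (h i)) \<inter> klein" using x by (auto simp: hplane_def klein_def)
    ultimately show False by blast
  qed
  show ?thesis unfolding maximum_class_def has_VC_dim_def using sub card vc1 vc2 by blast
qed

end
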